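(* Let $(\mathcal{X},d)$ be a finite metric space, $P$ a probability distribution on $\mathcal{X}$, $k\ge1$ an integer, and $O\in\mathcal{X}_k$ an optimal $k$-RP solution. Then there exists a $k$-multiset $S\in\mathcal{X}_k$ all of whose points have positive probability under $P$ such that $\mathbb{E}_{X\sim P_k}[d_k(S,X)]\le 2\cdot\mathbb{E}_{X\sim P_k}[d_k(O,X)]$.
   Context: $\mathcal{X}_k$ is the set of multisets of exactly $k$ points of $\mathcal{X}$. For $U,V\in\mathcal{X}_k$, $d_k(U,V)$ is the minimum, over perfect matchings between the $k$ elements of $U$ and the $k$ elements of $V$ (with multiplicity), of the sum of the distances of matched pairs. $P_k$ is the distribution of the multiset of $k$ points drawn i.i.d. from $P$. The $k$-RP cost of $S\in\mathcal{X}_k$ is $\mathbb{E}_{X\sim P_k}[d_k(S,X)]$, and an optimal solution $O$ minimizes it over $\mathcal{X}_k$. *)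

theory Defs
  imports "HOL-Probability.Probability"
begin

definition finite_metric_space :: "'a set \<Rightarrow> ('a \<Rightarrow> 'a \<Rightarrow> real) \<Rightarrow> bool" where
  "finite_metric_space X d \<longleftrightarrow> finite X \<and>
     (\<forall>x\<in>X. \<forall>y\<in>X. (d x y = 0 \<longleftrightarrow> x = y)) \<and>
     (\<forall>x\<in>X. \<forall>y\<in>X. d x y = d y x) \<and>
     (\<forall>x\<in>X. \<forall>y\<in>X. \<forall>z\<in>X. d x z \<le> d x y + d y z)"

definition kmultisets :: "'a set \<Rightarrow> nat \<Rightarrow> 'a multiset set" where
  "kmultisets X k = {S. size S = k \<and> set_mset S \<subseteq> X}"

text \<open>d_k(U,V): minimum over perfect matchings (pairings of enumerations) of the
  total distance of matched pairs.\<close>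
definition dk :: "('a \<Rightarrow> 'a \<Rightarrow> real) \<Rightarrow> 'a multiset \<Rightarrow> 'a multiset \<Rightarrow> real" where
  "dk d U V = Min {(\<Sum>i<size U. d (xs ! i) (ys ! i)) | xs ys. mset xs = U \<and> mset ys = V}"

fun Pk :: "'a pmf \<Rightarrow> nat \<Rightarrow> 'a multiset pmf" where
  "Pk P 0 = return_pmf {#}"
| "Pk P (Suc k) = bind_pmf P (\<lambda>x. map_pmf (add_mset x) (Pk P k))"

definition krp_cost :: "('a \<Rightarrow> 'a \<Rightarrow> real) \<Rightarrow> 'a pmf \<Rightarrow> nat \<Rightarrow> 'a multiset \<Rightarrow> real" where
  "krp_cost d P k S = measure_pmf.expectation (Pk P k) (\<lambda>X. dk d S X)"

definition krp_optimal :: "'a set \<Rightarrow> ('a \<Rightarrow> 'a \<Rightarrow> real) \<Rightarrow> 'a pmf \<Rightarrow> nat \<Rightarrow> 'a multiset \<Rightarrow> bool" where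
  "krp_optimal X d P k Opt \<longleftrightarrow> Opt \<in> kmultisets X k \<and>
     (\<forall>S\<in>kmultisets X k. krp_cost d P k Opt \<le> krp_cost d P k S)"

end

theory Submission
  imports Defs
begin

lemma finite_mset_lists: "finite {xs. mset xs = U}"
proof -
  have "{xs. mset xs = U} \<subseteq> {xs. set xs \<subseteq> set_mset U \<and> length xs = size U}" by auto
  thus ?thesis using finite_lists_length_eq[of "set_mset U" "size U"] finite_subset by blast
qed

lemma dk_set_finite:
  "finite {(\<Sum>i<size U. d (xs ! i) (ys ! i)) | xs ys. mset xs = U \<and> mset ys = V}"
  by (rule finite_image_set2) (rule finite_mset_lists)+

lemma dk_le: "mset xs = U \<Longrightarrow> mset ys = V \<Longrightarrow> dk d U V \<le> (\<Sum>i<size U. d (xs ! i) (ys ! i))"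
  unfolding dk_def by (rule Min_le[OF dk_set_finite]) blast

lemma dk_attained: "\<exists>xs ys. mset xs = U \<and> mset ys = V \<and> dk d U V = (\<Sum>i<size U. d (xs ! i) (ys ! i))"
proof -
  obtain xs ys where "mset xs = U" "mset ys = V" using ex_mset by metis
  hence ne: "{(\<Sum>i<size U. d (xs ! i) (ys ! i)) | xs ys. mset xs = U \<and> mset ys = V} \<noteq> {}" by blast
  show ?thesis using Min_in[OF dk_set_finite ne] unfolding dk_def by blast
qed

lemma Pk_set: "set_pmf (Pk P k) \<subseteq> {M. set_mset M \<subseteq> set_pmf P \<and> size M = k}"
proof (induction k)
  case (Suc k)
  show ?case
  proof
    fix M assume "M \<in> set_pmf (Pk P (Suc k))"
    then obtain x N where "x \<in> set_pmf P" "N \<in> set_pmf (Pk P k)" "M = add_mset x N" by auto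
    thus "M \<in> {M. set_mset M \<subseteq> set_pmf P \<and> size M = Suc k}" using Suc.IH by auto
  qed
qed simp

lemma Pk_finite: "finite (set_pmf P) \<Longrightarrow> finite (set_pmf (Pk P k))"
  by (induction k) auto

theorem corollary1:
  fixes X :: "'a set" and d :: "'a \<Rightarrow> 'a \<Rightarrow> real" and P :: "'a pmf"
    and k :: nat and Opt :: "'a multiset"
  assumes "finite_metric_space X d"
    and "set_pmf P \<subseteq> X"
    and "k \<ge> 1"
    and "krp_optimal X d P k Opt"
  shows "\<exists>S\<in>kmultisets X k. (\<forall>x\<in>#S. pmf P x > 0) \<and>
           krp_cost d P k S \<le> 2 * krp_cost d P k Opt"
proof -
  have finX: "finite X" and sym: "\<And>x y. x \<in> X \<Longrightarrow> y \<in> X \<Longrightarrow> d x y = d y x"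
    and tri: "\<And>x y z. x \<in> X \<Longrightarrow> y \<in> X \<Longrightarrow> z \<in> X \<Longrightarrow> d x z \<le> d x y + d y z"
    using assms(1) unfolding finite_metric_space_def by blast+
  have finP: "finite (set_pmf P)" using finX assms(2) finite_subset by blast
  have neP: "set_pmf P \<noteq> {}" by (rule set_pmf_not_empty)
  define p where "p u = arg_min_on (d u) (set_pmf P)" for u
  have pin: "p u \<in> set_pmf P" for u unfolding p_def using arg_min_if_finite(1)[OF finP neP] by blast
  have pmin: "d u (p u) \<le> d u y" if "y \<in> set_pmf P" for u y
    using arg_min_if_finite(2)[OF finP neP, of "d u"] that unfolding p_def by force
  have OX: "set_mset Opt \<subseteq> X" and Osz: "size Opt = k"
    using assms(4) unfolding krp_optimal_def kmultisets_def by auto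
  define S where "S = image_mset p Opt"
  have SX: "S \<in> kmultisets X k" unfolding kmultisets_def S_def using Osz pin assms(2) by auto
  have Spos: "\<forall>x\<in>#S. pmf P x > 0" unfolding S_def using pin by (auto simp: pmf_positive)
  have key: "dk d S Y \<le> 2 * dk d Opt Y" if Y: "Y \<in> set_pmf (Pk P k)" for Y
  proof -
    have YP: "set_mset Y \<subseteq> set_pmf P" using Pk_set Y by blast
    obtain xs ys where xs: "mset xs = Opt" and ys: "mset ys = Y"
      and eq: "dk d Opt Y = (\<Sum>i<size Opt. d (xs ! i) (ys ! i))" using dk_attained by blast
    have "size Y = k" using Pk_set Y by blast
    hence lys: "length ys = size Opt" using ys Osz by (metis size_mset)
    have lxs: "length xs = size Opt" using xs by auto
    have "dk d S Y \<le> (\<Sum>i<size S. d (map p xs ! i) (ys ! i))"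
    proof (rule dk_le)
      show "mset (map p xs) = S" unfolding S_def using xs by simp
    qed (rule ys)
    also have "\<dots> = (\<Sum>i<size Opt. d (p (xs ! i)) (ys ! i))"
    proof -
      have "size S = size Opt" unfolding S_def by simp
      moreover have "\<And>i. i \<in> {..<size Opt} \<Longrightarrow> d (map p xs ! i) (ys ! i) = d (p (xs ! i)) (ys ! i)"
        using lxs by simp
      ultimately show ?thesis by (metis (no_types, lifting) sum.cong)
    qed
    also have "\<dots> \<le> (\<Sum>i<size Opt. 2 * d (xs ! i) (ys ! i))"
    proof (rule sum_mono)
      fix i assume "i \<in> {..<size Opt}"
      hence i1: "i < length xs" and i2: "i < length ys" using lxs lys by auto
      have xo: "xs ! i \<in> X" using OX xs i1 by (metis nth_mem set_mset_mset subsetD)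
      have y: "ys ! i \<in> set_pmf P" using YP ys i2 by (metis nth_mem set_mset_mset subsetD)
      have yX: "ys ! i \<in> X" using y assms(2) by blast
      have pX: "p (xs ! i) \<in> X" using pin assms(2) by blast
      have "d (p (xs ! i)) (ys ! i) \<le> d (p (xs ! i)) (xs ! i) + d (xs ! i) (ys ! i)"
        using tri[OF pX xo yX] .
      also have "d (p (xs ! i)) (xs ! i) = d (xs ! i) (p (xs ! i))" using sym[OF pX xo] .
      also have "\<dots> \<le> d (xs ! i) (ys ! i)" using pmin[OF y] .
      finally show "d (p (xs ! i)) (ys ! i) \<le> 2 * d (xs ! i) (ys ! i)" by simp
    qed
    also have "\<dots> = 2 * dk d Opt Y" using eq by (simp add: sum_distrib_left)
    finally show ?thesis .
  qed
  have finPk: "finite (set_pmf (Pk P k))" using Pk_finite[OF finP] .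
  have "krp_cost d P k S \<le> measure_pmf.expectation (Pk P k) (\<lambda>Y. 2 * dk d Opt Y)"
    unfolding krp_cost_def
  proof (rule integral_mono_AE)
    show "integrable (measure_pmf (Pk P k)) (dk d S)" by (rule integrable_measure_pmf_finite[OF finPk])
    show "integrable (measure_pmf (Pk P k)) (\<lambda>Y. 2 * dk d Opt Y)" by (rule integrable_measure_pmf_finite[OF finPk])
    show "AE Y in measure_pmf (Pk P k). dk d S Y \<le> 2 * dk d Opt Y" by (rule AE_pmfI) (rule key)
  qed
  also have "\<dots> = 2 * krp_cost d P k Opt" unfolding krp_cost_def by simp
  finally show ?thesis using SX Spos by blast
qed

end
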